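(* Let $M_w(\omega_{\max})=\max_{|\xi|\le\omega_{\max}}|\xi|\,w(|\xi|)$ and assume $M_w(\omega_{\max})<\infty$. Then the Hermitian matrix $\hat A$ and the self-adjoint operator $\hat L$ defined in the context satisfy $$\lambda_{\min}(\hat A)\ge\frac1{2M_w(\omega_{\max})},\qquad \lambda_{\min}(\hat L)\ge\frac1{2\pi M_w(\omega_{\max})^2}.$$
   Context: Let $w:[0,\infty)\to(0,\infty]$ be a radial weight and $\langle f,g\rangle_{L^2_w(\mathbb R^3)}=\int f\overline g\,w(|\xi|)d\xi$. Let $\hat h_1,\dots,\hat h_{\hat p}$ be continuous functions on $\mathbb R^3$ supported in the ball $B_{\omega_{\max}}$ of radius $\omega_{\max}$, orthonormal in $L^2_w(\mathbb R^3)$. Let $\mathcal K(\xi_1,\xi_2)=\frac1{2\pi|\xi_1\times\xi_2|}$. Define the $\hat p\times\hat p$ matrix $\hat A_{ij}=\int_{\mathbb R^3}\hat h_j(\xi)\overline{\hat h_i(\xi)}\frac{1}{2|\xi|}d\xi$ and the operator $\hat L$ on $\mathbb C^{\hat p\times\hat p}$ (inner product $\mathrm{tr}(M_2^HM_1)$) by $(\hat L\Sigma)_{i_1i_2}=\sum_{j_1,j_2}\hat L_{i_1i_2,j_1j_2}\Sigma_{j_1j_2}$ with $$\hat L_{i_1i_2,j_1j_2}=\int_{\mathbb R^3\times\mathbb R^3}\hat h_{j_1}(\xi_1)\overline{\hat h_{j_2}(\xi_2)}\,\mathcal K(\xi_1,\xi_2)\,\overline{\hat h_{i_1}(\xi_1)}\hat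 h_{i_2}(\xi_2)\,d\xi_1d\xi_2.$$ (Equivalently, identifying $\mu\in\mathbb C^{\hat p}$ with $m=\sum\mu_i\hat h_i$ and $\Sigma$ with $\sum\Sigma_{ij}\hat h_i(\xi_1)\overline{\hat h_j(\xi_2)}$, $\hat A$ is $m\mapsto\pi(m/(2|\xi|))$ and $\hat L$ is $\mathcal C\mapsto\pi(\mathcal C\mathcal K)$, with $\pi$ the projection $\eta\mapsto\sum\hat h_i\int\eta\overline{\hat h_i}$ and its tensor analogue.) These are the large-sample limits $\mathbb E[\hat{\mathbf P}^H\hat{\mathbf P}]$, $\mathbb E[\hat{\mathbf P}^H\hat{\mathbf P}\,\cdot\,\hat{\mathbf P}^H\hat{\mathbf P}]$ for projections at uniformly random rotations. *)

theory Defs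
  imports "HOL-Analysis.Analysis"
begin

definition mat_eigenvalue :: "nat \<Rightarrow> (nat \<Rightarrow> nat \<Rightarrow> complex) \<Rightarrow> complex \<Rightarrow> bool" where
  "mat_eigenvalue p A lam \<longleftrightarrow>
     (\<exists>v :: nat \<Rightarrow> complex. (\<exists>i<p. v i \<noteq> 0) \<and>
        (\<forall>i<p. (\<Sum>j<p. A i j * v j) = lam * v i))"

definition op_eigenvalue :: "nat \<Rightarrow> (nat \<Rightarrow> nat \<Rightarrow> nat \<Rightarrow> nat \<Rightarrow> complex) \<Rightarrow> complex \<Rightarrow> bool" where
  "op_eigenvalue p L lam \<longleftrightarrow>
     (\<exists>S :: nat \<Rightarrow> nat \<Rightarrow> complex. (\<exists>i1<p. \<exists>i2<p. S i1 i2 \<noteq> 0) \<and>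
        (\<forall>i1<p. \<forall>i2<p. (\<Sum>j1<p. \<Sum>j2<p. L i1 i2 j1 j2 * S j1 j2) = lam * S i1 i2))"

definition inner_w :: "(real \<Rightarrow> ennreal) \<Rightarrow> (real^3 \<Rightarrow> complex) \<Rightarrow> (real^3 \<Rightarrow> complex) \<Rightarrow> complex" where
  "inner_w w f g = integral\<^sup>L lborel (\<lambda>\<xi>. f \<xi> * cnj (g \<xi>) * complex_of_real (enn2real (w (norm \<xi>))))"

definition M_w :: "(real \<Rightarrow> ennreal) \<Rightarrow> real \<Rightarrow> ennreal" where
  "M_w w \<omega> = (SUP \<xi>\<in>cball (0::real^3) \<omega>. ennreal (norm \<xi>) * w (norm \<xi>))"

definition kernelK :: "real^3 \<Rightarrow> real^3 \<Rightarrow> real" where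
  "kernelK \<xi>1 \<xi>2 = 1 / (2 * pi * norm (cross3 \<xi>1 \<xi>2))"

definition hatA :: "(nat \<Rightarrow> real^3 \<Rightarrow> complex) \<Rightarrow> nat \<Rightarrow> nat \<Rightarrow> complex" where
  "hatA h i j = integral\<^sup>L lborel (\<lambda>\<xi>. h j \<xi> * cnj (h i \<xi>) * complex_of_real (1 / (2 * norm \<xi>)))"

definition hatL :: "(nat \<Rightarrow> real^3 \<Rightarrow> complex) \<Rightarrow> nat \<Rightarrow> nat \<Rightarrow> nat \<Rightarrow> nat \<Rightarrow> complex" where
  "hatL h i1 i2 j1 j2 = integral\<^sup>L (lborel \<Otimes>\<^sub>M lborel)
     (\<lambda>(\<xi>1, \<xi>2). h j1 \<xi>1 * cnj (h j2 \<xi>2) * complex_of_real (kernelK \<xi>1 \<xi>2)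
                  * cnj (h i1 \<xi>1) * h i2 \<xi>2)"

end

theory Submission
  imports Defs "HOL-Analysis.Analysis"
begin



lemma Basis_real3: "(Basis :: (real^3) set) = {axis 1 1, axis 2 1, axis 3 1}"
proof -
  have "(Basis :: (real^3) set) = (\<lambda>i. axis i 1) ` UNIV"
    unfolding Basis_vec_def by auto
  also have "(UNIV :: 3 set) = {1,2,3}" using exhaust_3 by auto
  finally show ?thesis by simp
qed

lemma axis3_distinct: "axis (1::3) (1::real) \<noteq> axis 2 1" "axis (1::3) (1::real) \<noteq> axis 3 1" "axis (2::3) (1::real) \<noteq> axis 3 1"
  by (simp_all add: axis_eq_axis)

lemma nn_integral_prod3:
  fixes g1 g2 g3 :: "real \<Rightarrow> ennreal"
  assumes [measurable]: "g1 \<in> borel_measurable borel" "g2 \<in> borel_measurable borel" "g3 \<in> borel_measurable borel"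
  shows "(\<integral>\<^sup>+x. g1 (x$1) * g2 (x$2) * g3 (x$3) \<partial>(lborel :: (real^3) measure))
      = (\<integral>\<^sup>+t. g1 t \<partial>lborel) * (\<integral>\<^sup>+t. g2 t \<partial>lborel) * (\<integral>\<^sup>+t. g3 t \<partial>lborel)"
proof -
  define f where "f b = (if b = axis 1 1 then g1 else if b = axis 2 1 then g2 else g3)" for b :: "real^3"
  have *: "(\<integral>\<^sup>+x. (\<Prod>b\<in>Basis. f b (x \<bullet> b)) \<partial>(lborel :: (real^3) measure)) = (\<Prod>b\<in>Basis. (\<integral>\<^sup>+x. f b x \<partial>lborel))"
    by (rule nn_integral_lborel_prod) (auto simp: f_def)
  have e: "(\<Prod>b\<in>Basis. f b (x \<bullet> b)) = g1 (x$1) * g2 (x$2) * g3 (x$3)" for x :: "real^3"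
    unfolding Basis_real3 using axis3_distinct by (simp add: f_def inner_axis mult.assoc)
  have e2: "(\<Prod>b\<in>(Basis::(real^3) set). (\<integral>\<^sup>+x. f b x \<partial>lborel)) = (\<integral>\<^sup>+t. g1 t \<partial>lborel) * (\<integral>\<^sup>+t. g2 t \<partial>lborel) * (\<integral>\<^sup>+t. g3 t \<partial>lborel)"
    unfolding Basis_real3 using axis3_distinct by (simp add: f_def mult.assoc)
  show ?thesis using * e e2 by simp
qed

definition phi :: "real \<Rightarrow> real \<Rightarrow> real \<Rightarrow> ennreal" where
  "phi a R t = indicator {-R..R} t * (if t = 0 then \<infinity> else ennreal (\<bar>t\<bar> powr (-a)))"

lemma phi_measurable[measurable]: "phi a R \<in> borel_measurable borel"
  unfolding phi_def by measurable

lemma phi_fin: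
  assumes a: "0 \<le> a" "a < 1" and R: "0 \<le> R"
  shows "(\<integral>\<^sup>+t. phi a R t \<partial>lborel) < \<infinity>"
proof -
  define g where "g t = ennreal (indicator {0..R} t * t powr (-a))" for t :: real
  have g_meas[measurable]: "g \<in> borel_measurable borel" unfolding g_def by measurable
  have gint: "(\<integral>\<^sup>+t. g t \<partial>lborel) = ennreal (R powr (-a + 1) / (-a + 1))"
    unfolding g_def
    by (rule nn_integral_has_integral_lebesgue) (use has_integral_powr_from_0[of "-a" R] a R in auto)
  have gint2: "(\<integral>\<^sup>+t. g (- t) \<partial>lborel) = (\<integral>\<^sup>+t. g t \<partial>lborel)"
  proof -
    have "(\<integral>\<^sup>+t. g t \<partial>lborel) = (\<integral>\<^sup>+t. g t \<partial>distr lborel borel uminus)"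
      by (simp add: lborel_distr_uminus)
    also have "\<dots> = (\<integral>\<^sup>+t. g (- t) \<partial>lborel)"
      by (rule nn_integral_distr) auto
    finally show ?thesis by simp
  qed
  have "(\<integral>\<^sup>+t. phi a R t \<partial>lborel) = (\<integral>\<^sup>+t. ennreal (indicator {-R..R} t * \<bar>t\<bar> powr (-a)) \<partial>lborel)"
  proof (rule nn_integral_cong_AE)
    show "AE t in lborel. phi a R t = ennreal (indicator {-R..R} t * \<bar>t\<bar> powr (-a))"
      using AE_lborel_singleton[of 0] by eventually_elim (auto simp: phi_def indicator_def)
  qed
  also have "\<dots> \<le> (\<integral>\<^sup>+t. g t + g (- t) \<partial>lborel)"
    by (rule nn_integral_mono) (auto simp: g_def indicator_def ennreal_plus[symmetric] simp del: ennreal_plus)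
  also have "\<dots> = (\<integral>\<^sup>+t. g t \<partial>lborel) + (\<integral>\<^sup>+t. g (- t) \<partial>lborel)"
    by (rule nn_integral_add) auto
  also have "\<dots> < \<infinity>" using gint2 gint by simp
  finally show ?thesis .
qed



lemma distr_orth:
  fixes T :: "real^3 \<Rightarrow> real^3"
  assumes T: "orthogonal_transformation T"
  shows "distr lborel borel T = lborel"
proof (rule lborel_eqI[symmetric])
  have lin: "linear T" using T by (simp add: orthogonal_transformation_linear)
  have Tm[measurable]: "T \<in> borel_measurable borel"
    using lin by (intro borel_measurable_continuous_onI linear_continuous_on) (simp add: linear_conv_bounded_linear[symmetric])
  show "sets (distr lborel borel T) = sets borel" by simp
  fix l u :: "real^3" assume le: "\<And>b. b \<in> Basis \<Longrightarrow> l \<bullet> b \<le> u \<bullet> b"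
  have Ti: "orthogonal_transformation (inv T)" using T by (rule orthogonal_transformation_inv)
  have eq: "T -` box l u = inv T ` box l u"
    using orthogonal_transformation_bij[OF T]
    by (auto simp: bij_def surj_f_inv_f inv_f_f image_iff) (metis bij_inv_eq_iff orthogonal_transformation_bij[OF T])
  have Sb: "inv T ` box l u \<in> sets borel"
    unfolding eq[symmetric] using measurable_sets[OF Tm, of "box l u"] by simp
  have Sl: "inv T ` box l u \<in> lmeasurable"
    by (rule measurable_orthogonal_image[OF Ti]) simp
  have "emeasure (distr lborel borel T) (box l u) = emeasure lborel (inv T ` box l u)"
    by (simp add: emeasure_distr eq)
  also have "\<dots> = emeasure lebesgue (inv T ` box l u)"
    using Sb by simp
  also have "\<dots> = measure lebesgue (inv T ` box l u)"
    using Sl by (simp add: emeasure_eq_measure2)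
  also have "\<dots> = measure lebesgue (box l u)"
    by (simp add: measure_orthogonal_image[OF Ti])
  also have "\<dots> = emeasure lebesgue (box l u)"
    by (simp add: emeasure_eq_measure2)
  also have "\<dots> = emeasure lborel (box l u)" by simp
  also have "\<dots> = (\<Prod>b\<in>Basis. (u - l) \<bullet> b)"
    using le by (simp add: emeasure_lborel_box_eq)
  finally show "emeasure (distr lborel borel T) (box l u) = (\<Prod>b\<in>Basis. (u - l) \<bullet> b)" .
qed


lemma norm_cross_e3: "norm (cross3 (axis 3 1) y) = sqrt ((y$1)^2 + (y$2)^2)"
  by (simp add: norm_eq_sqrt_inner cross3_simps axis_def power2_eq_square)
lemma comp_le: "\<bar>y$i\<bar> \<le> norm (y::real^3)" by (rule component_le_norm_cart)
lemma real_ineq3: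
  fixes n s1 s2 s3 :: real
  assumes "0 < s1" "0 < s2" "0 < s3" "s1 \<le> n" "s2 \<le> n" "s3 \<le> n"
  shows "1 / n \<le> s1 powr (-1/3) * s2 powr (-1/3) * s3 powr (-1/3)"
proof -
  have n: "n > 0" using assms by linarith
  have m: "n powr (-1/3) \<le> s powr (-1/3)" if "0 < s" "s \<le> n" for s
    by (rule powr_mono2') (use that in auto)
  have "1 / n = n powr (-1/3) * n powr (-1/3) * n powr (-1/3)"
    using n by (simp add: powr_add[symmetric] powr_minus_divide)
  also have "\<dots> \<le> s1 powr (-1/3) * s2 powr (-1/3) * s3 powr (-1/3)"
    by (intro mult_mono m) (use assms in auto)
  finally show ?thesis .
qed
lemma real_ineq2:
  fixes y1 y2 :: real
  assumes "y1 \<noteq> 0" "y2 \<noteq> 0"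
  shows "1 / sqrt (y1^2 + y2^2) \<le> \<bar>y1\<bar> powr (-1/2) * \<bar>y2\<bar> powr (-1/2)"
proof -
  have "2 * \<bar>y1\<bar> * \<bar>y2\<bar> \<le> y1^2 + y2^2"
    using sum_squares_bound[of "\<bar>y1\<bar>" "\<bar>y2\<bar>"] by (simp add: power2_eq_square) 
  moreover have "0 \<le> \<bar>y1\<bar> * \<bar>y2\<bar>" by simp
  ultimately have "\<bar>y1\<bar> * \<bar>y2\<bar> \<le> y1^2 + y2^2" by linarith
  then have "sqrt (\<bar>y1\<bar> * \<bar>y2\<bar>) \<le> sqrt (y1^2 + y2^2)" by simp
  moreover have "sqrt (\<bar>y1\<bar> * \<bar>y2\<bar>) > 0" using assms by simp
  ultimately have "1 / sqrt (y1^2 + y2^2) \<le> 1 / sqrt (\<bar>y1\<bar> * \<bar>y2\<bar>)"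
    by (intro divide_left_mono) auto
  also have "\<dots> = \<bar>y1\<bar> powr (-1/2) * \<bar>y2\<bar> powr (-1/2)"
    using assms by (simp add: powr_minus_divide powr_half_sqrt real_sqrt_mult)
  finally show ?thesis .
qed




lemma phi_nz: "\<bar>t\<bar> \<le> R \<Longrightarrow> phi a R t \<noteq> 0"
  by (auto simp: phi_def indicator_def)
lemma phi_zero: "0 \<le> R \<Longrightarrow> phi a R 0 = \<infinity>"
  by (auto simp: phi_def indicator_def)
lemma phi_val: "t \<noteq> 0 \<Longrightarrow> \<bar>t\<bar> \<le> R \<Longrightarrow> phi a R t = ennreal (\<bar>t\<bar> powr (-a))"
  by (auto simp: phi_def indicator_def)

definition Kinv :: "real^3 \<Rightarrow> ennreal" where
  "Kinv x = (if x = 0 then \<infinity> else ennreal (1 / norm x))"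

lemma Kinv_measurable[measurable]: "Kinv \<in> borel_measurable borel"
  unfolding Kinv_def by measurable

lemma Kinv_bound:
  assumes R: "0 \<le> R"
  shows "indicator (cball 0 R) x * Kinv x \<le> phi (1/3) R (x$1) * phi (1/3) R (x$2) * phi (1/3) R (x$3)"
proof (cases "x \<in> cball 0 R")
  case False then show ?thesis by simp
next
  case True
  then have nx: "norm x \<le> R" by simp
  have c: "\<bar>x$i\<bar> \<le> R" for i using comp_le[of x i] nx by linarith
  show ?thesis
  proof (cases "x$1 = 0 \<or> x$2 = 0 \<or> x$3 = 0")
    case True
    then have "phi (1/3) R (x$1) * phi (1/3) R (x$2) * phi (1/3) R (x$3) = \<infinity>"
      using phi_nz[OF c] phi_zero[OF R] by (auto simp: ennreal_mult_eq_top_iff)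
    then show ?thesis by simp
  next
    case False
    then have x0: "x \<noteq> 0" by auto
    have "1 / norm x \<le> \<bar>x$1\<bar> powr (-1/3) * \<bar>x$2\<bar> powr (-1/3) * \<bar>x$3\<bar> powr (-1/3)"
      by (rule real_ineq3) (use False comp_le in auto)
    then have "ennreal (1 / norm x) \<le> ennreal (\<bar>x$1\<bar> powr (-1/3)) * ennreal (\<bar>x$2\<bar> powr (-1/3)) * ennreal (\<bar>x$3\<bar> powr (-1/3))"
      by (simp add: ennreal_mult[symmetric] del: ennreal_mult')
    then show ?thesis using False x0 True c by (simp add: Kinv_def phi_val)
  qed
qed

lemma Kinv_fin:
  assumes R: "0 \<le> R"
  shows "(\<integral>\<^sup>+x. indicator (cball 0 R) x * Kinv x \<partial>(lborel :: (real^3) measure)) < \<infinity>"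
proof -
  have "(\<integral>\<^sup>+x. indicator (cball 0 R) x * Kinv x \<partial>(lborel :: (real^3) measure))
      \<le> (\<integral>\<^sup>+x. phi (1/3) R ((x::real^3)$1) * phi (1/3) R (x$2) * phi (1/3) R (x$3) \<partial>lborel)"
    by (rule nn_integral_mono) (rule Kinv_bound[OF R])
  also have "\<dots> = (\<integral>\<^sup>+t. phi (1/3) R t \<partial>lborel) * (\<integral>\<^sup>+t. phi (1/3) R t \<partial>lborel) * (\<integral>\<^sup>+t. phi (1/3) R t \<partial>lborel)"
    by (rule nn_integral_prod3) auto
  also have "\<dots> < \<infinity>" using phi_fin[of "1/3" R] R by (simp add: ennreal_mult_less_top)
  finally show ?thesis .
qed

definition Kx :: "real^3 \<Rightarrow> real^3 \<Rightarrow> ennreal" where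
  "Kx a b = (if cross3 a b = 0 then \<infinity> else ennreal (1 / norm (cross3 a b)))"

lemma cross3_measurable[measurable]:
  fixes f g :: "'a \<Rightarrow> real^3"
  assumes [measurable]: "f \<in> borel_measurable M" "g \<in> borel_measurable M"
  shows "(\<lambda>x. cross3 (f x) (g x)) \<in> borel_measurable M"
  by (rule borel_measurable_continuous_Pair[OF assms])
     (intro continuous_on_cross continuous_on_fst continuous_on_snd continuous_on_id)

lemma Kx_measurable[measurable]:
  fixes f g :: "'a \<Rightarrow> real^3"
  assumes [measurable]: "f \<in> borel_measurable M" "g \<in> borel_measurable M"
  shows "(\<lambda>x. Kx (f x) (g x)) \<in> borel_measurable M"
  unfolding Kx_def by measurable

definition Qc :: "real \<Rightarrow> ennreal" where
  "Qc R = (\<integral>\<^sup>+y. phi (1/2) R (y$1) * phi (1/2) R (y$2) * indicator {-R..R} (y$3) \<partial>(lborel :: (real^3) measure))"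

lemma Qc_fin: "0 \<le> R \<Longrightarrow> Qc R < \<infinity>"
  unfolding Qc_def
  by (subst nn_integral_prod3) (use phi_fin[of "1/2" R] in \<open>auto simp: ennreal_mult_less_top\<close>)

lemma Kx_e3_bound:
  assumes R: "0 \<le> R"
  shows "indicator (cball 0 R) y * Kx (axis 3 1) y \<le> phi (1/2) R (y$1) * phi (1/2) R (y$2) * indicator {-R..R} (y$3)"
proof (cases "y \<in> cball 0 R")
  case False then show ?thesis by simp
next
  case True
  then have ny: "norm y \<le> R" by simp
  have c: "\<bar>y$i\<bar> \<le> R" for i using comp_le[of y i] ny by linarith
  have i3: "indicator {-R..R} (y$3) = (1::ennreal)" using c[of 3] by (auto simp: indicator_def)
  show ?thesis
  proof (cases "y$1 = 0 \<or> y$2 = 0")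
    case True
    then have "phi (1/2) R (y$1) * phi (1/2) R (y$2) * indicator {-R..R} (y$3) = \<infinity>"
      using phi_nz[OF c] phi_zero[OF R] i3 by (auto simp: ennreal_mult_eq_top_iff)
    then show ?thesis by simp
  next
    case False
    have nz: "sqrt ((y$1)^2 + (y$2)^2) \<noteq> 0" using False by simp
    have "1 / sqrt ((y$1)^2 + (y$2)^2) \<le> \<bar>y$1\<bar> powr (-1/2) * \<bar>y$2\<bar> powr (-1/2)"
      by (rule real_ineq2) (use False in auto)
    then have "ennreal (1 / sqrt ((y$1)^2 + (y$2)^2)) \<le> ennreal (\<bar>y$1\<bar> powr (-1/2)) * ennreal (\<bar>y$2\<bar> powr (-1/2))"
      by (simp add: ennreal_mult[symmetric] del: ennreal_mult')
    moreover have "cross3 (axis 3 1) y \<noteq> 0" using nz norm_cross_e3[of y] by auto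
    ultimately show ?thesis using False True c i3 by (simp add: Kx_def phi_val norm_cross_e3)
  qed
qed




lemma Kx_inner:
  assumes a: "a \<noteq> 0" and R: "0 \<le> R"
  shows "(\<integral>\<^sup>+b. indicator (cball 0 R) b * Kx a b \<partial>lborel) \<le> ennreal (1 / norm a) * Qc R"
proof -
  obtain T :: "real^3 \<Rightarrow> real^3" where T: "orthogonal_transformation T" and Te: "T (axis 3 1) = (1 / norm a) *\<^sub>R a"
    using orthogonal_transformation_exists_1[of "axis 3 1" "(1 / norm a) *\<^sub>R a"] a
    by (auto simp: norm_axis_1)
  have lin: "linear T" using T by (simp add: orthogonal_transformation_linear)
  have Tm[measurable]: "T \<in> borel_measurable borel"
    using lin by (intro borel_measurable_continuous_onI linear_continuous_on) (simp add: linear_conv_bounded_linear[symmetric])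
  have na: "norm a > 0" using a by simp
  have cam[measurable]: "(\<lambda>b. cross3 a b) \<in> borel_measurable borel"
    by (intro borel_measurable_continuous_onI continuous_on_cross continuous_on_const continuous_on_id)
  have Kam[measurable]: "(\<lambda>b. Kx a b) \<in> borel_measurable borel"
    unfolding Kx_def by measurable
  have aT: "a = norm a *\<^sub>R T (axis 3 1)" using na Te by simp
  have cr: "cross3 a (T y) = norm a *\<^sub>R (det (matrix T) *\<^sub>R T (cross3 (axis 3 1) y))" for y
    by (subst aT) (simp add: cross_mult_left cross_orthogonal_transformation[OF T])
  have ncr: "norm (cross3 a (T y)) = norm a * norm (cross3 (axis 3 1) y)" for y
    unfolding cr using orthogonal_transformation_det[OF T] orthogonal_transformation_norm[OF T]
    by (simp add: abs_mult)
  have KT: "Kx a (T y) = ennreal (1 / norm a) * Kx (axis 3 1) y" for y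
  proof (cases "cross3 (axis 3 1) y = 0")
    case True
    then have "cross3 a (T y) = 0" using ncr[of y] by simp
    then show ?thesis using True na by (simp add: Kx_def ennreal_mult_top)
  next
    case False
    then have "cross3 a (T y) \<noteq> 0" using ncr[of y] na by (metis mult_eq_0_iff norm_eq_zero less_irrefl)
    then show ?thesis using False na ncr[of y] by (simp add: Kx_def ennreal_mult[symmetric] del: ennreal_mult')
  qed
  have cb[measurable]: "cball (0::real^3) R \<in> sets borel" by simp
  have Fm[measurable]: "(\<lambda>b. indicator (cball 0 R) b * Kx a b) \<in> borel_measurable borel"
    by measurable
  have iT: "indicator (cball 0 R) (T y) = (indicator (cball 0 R) y :: ennreal)" for y
    using orthogonal_transformation_norm[OF T] by (simp add: indicator_def)
  have "(\<integral>\<^sup>+b. indicator (cball 0 R) b * Kx a b \<partial>lborel) = (\<integral>\<^sup>+b. indicator (cball 0 R) b * Kx a b \<partial>distr lborel borel T)"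
    by (simp add: distr_orth[OF T])
  also have "\<dots> = (\<integral>\<^sup>+y. indicator (cball 0 R) (T y) * Kx a (T y) \<partial>lborel)"
    by (rule nn_integral_distr) auto
  also have "\<dots> = (\<integral>\<^sup>+y. ennreal (1 / norm a) * (indicator (cball 0 R) y * Kx (axis 3 1) y) \<partial>lborel)"
    by (simp add: iT KT mult.left_commute)
  also have "\<dots> = ennreal (1 / norm a) * (\<integral>\<^sup>+y. indicator (cball 0 R) y * Kx (axis 3 1) y \<partial>lborel)"
    by (rule nn_integral_cmult) auto
  also have "\<dots> \<le> ennreal (1 / norm a) * Qc R"
    unfolding Qc_def by (intro mult_left_mono nn_integral_mono Kx_e3_bound[OF R]) auto
  finally show ?thesis .
qed




lemma Kx_pair_fin:
  assumes R: "0 \<le> R"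
  shows "(\<integral>\<^sup>+p. indicator (cball 0 R) (fst p) * indicator (cball 0 R) (snd p) * Kx (fst p) (snd p)
            \<partial>(lborel \<Otimes>\<^sub>M (lborel :: (real^3) measure))) < \<infinity>"
proof -
  have cb[measurable]: "cball (0::real^3) R \<in> sets borel" by simp
  have "(\<integral>\<^sup>+p. indicator (cball 0 R) (fst p) * indicator (cball 0 R) (snd p) * Kx (fst p) (snd p)
            \<partial>(lborel \<Otimes>\<^sub>M (lborel :: (real^3) measure)))
      = (\<integral>\<^sup>+a. \<integral>\<^sup>+b. indicator (cball 0 R) a * (indicator (cball 0 R) b * Kx a b) \<partial>lborel \<partial>lborel)"
    by (subst lborel.nn_integral_fst[symmetric]) (auto simp: mult.assoc)
  also have "\<dots> = (\<integral>\<^sup>+a. indicator (cball 0 R) a * (\<integral>\<^sup>+b. indicator (cball 0 R) b * Kx a b \<partial>lborel) \<partial>lborel)"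
  proof (rule nn_integral_cong)
    fix a :: "real^3"
    have cam[measurable]: "(\<lambda>b. cross3 a b) \<in> borel_measurable borel"
      by (intro borel_measurable_continuous_onI continuous_on_cross continuous_on_const continuous_on_id)
    have Kam[measurable]: "(\<lambda>b. Kx a b) \<in> borel_measurable borel"
      unfolding Kx_def by measurable
    show "(\<integral>\<^sup>+b. indicator (cball 0 R) a * (indicator (cball 0 R) b * Kx a b) \<partial>lborel) =
          indicator (cball 0 R) a * (\<integral>\<^sup>+b. indicator (cball 0 R) b * Kx a b \<partial>lborel)"
      by (rule nn_integral_cmult) measurable
  qed
  also have "\<dots> \<le> (\<integral>\<^sup>+a. (Qc R + 1) * (indicator (cball 0 R) a * Kinv a) \<partial>lborel)"
  proof (rule nn_integral_mono)
    fix a :: "real^3"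
    show "indicator (cball 0 R) a * (\<integral>\<^sup>+b. indicator (cball 0 R) b * Kx a b \<partial>lborel)
          \<le> (Qc R + 1) * (indicator (cball 0 R) a * Kinv a)"
    proof (cases "a \<in> cball 0 R")
      case False then show ?thesis by simp
    next
      case True
      show ?thesis
      proof (cases "a = 0")
        case True
        then have "(Qc R + 1) * (indicator (cball 0 R) a * Kinv a) = \<infinity>"
          using R by (simp add: Kinv_def ennreal_mult_top indicator_def)
        then show ?thesis by simp
      next
        case False
        have "(\<integral>\<^sup>+b. indicator (cball 0 R) b * Kx a b \<partial>lborel) \<le> ennreal (1 / norm a) * Qc R"
          by (rule Kx_inner[OF False R])
        also have "\<dots> \<le> ennreal (1 / norm a) * (Qc R + 1)"
          by (intro mult_left_mono) auto
        finally show ?thesis using True False by (simp add: Kinv_def mult.commute)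
      qed
    qed
  qed
  also have "\<dots> = (Qc R + 1) * (\<integral>\<^sup>+a. indicator (cball 0 R) a * Kinv a \<partial>lborel)"
    by (rule nn_integral_cmult) measurable
  also have "\<dots> < \<infinity>"
    using Qc_fin[OF R] Kinv_fin[OF R] by (simp add: ennreal_mult_less_top)
  finally show ?thesis .
qed

lemma AE_cross_nz:
  assumes R: "0 \<le> R"
  shows "AE p in (lborel \<Otimes>\<^sub>M (lborel :: (real^3) measure)).
           fst p \<in> cball 0 R \<longrightarrow> snd p \<in> cball 0 R \<longrightarrow> cross3 (fst p) (snd p) \<noteq> 0"
proof -
  have cb[measurable]: "cball (0::real^3) R \<in> sets borel" by simp
  have "AE p in (lborel \<Otimes>\<^sub>M (lborel :: (real^3) measure)).
      indicator (cball 0 R) (fst p) * indicator (cball 0 R) (snd p) * Kx (fst p) (snd p) \<noteq> \<infinity>"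
    by (rule nn_integral_PInf_AE) (use Kx_pair_fin[OF R] in auto)
  then show ?thesis
    by eventually_elim (auto simp: Kx_def indicator_def)
qed



lemma prod_integrable:
  fixes f g :: "'a::euclidean_space \<Rightarrow> complex"
  assumes f: "integrable lborel f" and g: "integrable lborel g"
  shows "integrable (lborel \<Otimes>\<^sub>M lborel) (\<lambda>p. f (fst p) * g (snd p))"
proof (rule lborel_pair.Fubini_integrable)
  have [measurable]: "f \<in> borel_measurable borel" "g \<in> borel_measurable borel"
    using f g by (auto dest: borel_measurable_integrable)
  show "(\<lambda>p. f (fst p) * g (snd p)) \<in> borel_measurable (lborel \<Otimes>\<^sub>M lborel)" by measurable
  have "integrable lborel (\<lambda>x. norm (f x) * (LBINT y. norm (g y)))"
    using f by (intro integrable_mult_left integrable_norm)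
  then show "integrable lborel (\<lambda>x. LBINT y. norm (f (fst (x, y)) * g (snd (x, y))))"
    by (simp add: norm_mult)
  show "AE x in lborel. integrable lborel (\<lambda>y. f (fst (x, y)) * g (snd (x, y)))"
    using g by (auto intro: integrable_mult_right)
qed

lemma prod_integral:
  fixes f g :: "'a::euclidean_space \<Rightarrow> complex"
  assumes f: "integrable lborel f" and g: "integrable lborel g"
  shows "integral\<^sup>L (lborel \<Otimes>\<^sub>M lborel) (\<lambda>p. f (fst p) * g (snd p)) = integral\<^sup>L lborel f * integral\<^sup>L lborel g"
proof -
  have "integral\<^sup>L (lborel \<Otimes>\<^sub>M lborel) (\<lambda>p. f (fst p) * g (snd p)) = (LBINT x. LBINT y. f x * g y)"
    using lborel_pair.integral_fst'[OF prod_integrable[OF f g]] by simp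
  also have "\<dots> = (LBINT x. f x * integral\<^sup>L lborel g)"
    by simp
  also have "\<dots> = integral\<^sup>L lborel f * integral\<^sup>L lborel g" by simp
  finally show ?thesis .
qed



lemma cnj_measurable[measurable]: "f \<in> borel_measurable M \<Longrightarrow> (\<lambda>x. cnj (f x)) \<in> borel_measurable M"
  by (rule borel_measurable_continuous_on[where f=cnj]) (auto intro: continuous_intros)

lemma cor_measurable[measurable]: "f \<in> borel_measurable M \<Longrightarrow> (\<lambda>x. complex_of_real (f x)) \<in> borel_measurable M"
  by (rule borel_measurable_continuous_on[where f=complex_of_real]) (auto intro: continuous_intros)

lemma kernelK_measurable[measurable]:
  fixes f g :: "'a \<Rightarrow> real^3"
  assumes [measurable]: "f \<in> borel_measurable N" "g \<in> borel_measurable N"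
  shows "(\<lambda>x. kernelK (f x) (g x)) \<in> borel_measurable N"
  unfolding kernelK_def by measurable

locale P33 =
  fixes w :: "real \<Rightarrow> ennreal" and R :: real and p :: nat
    and h :: "nat \<Rightarrow> real^3 \<Rightarrow> complex"
  assumes w_pos: "\<forall>r\<ge>0. w r > 0"
    and R_pos: "R > 0"
    and h_cont: "\<forall>i<p. continuous_on UNIV (h i)"
    and h_supp: "\<forall>i<p. \<forall>\<xi>. norm \<xi> > R \<longrightarrow> h i \<xi> = 0"
    and h_L2: "\<forall>i<p. integrable lborel (\<lambda>\<xi>. (norm (h i \<xi>))\<^sup>2 * enn2real (w (norm \<xi>)))"
    and h_orth: "\<forall>i<p. \<forall>j<p. inner_w w (h i) (h j) = (if i = j then 1 else 0)"
    and M_fin: "M_w w R < \<infinity>"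
begin

definition wr :: "real^3 \<Rightarrow> real" where "wr \<xi> = enn2real (w (norm \<xi>))"
definition M :: real where "M = enn2real (M_w w R)"

lemma wr_nonneg: "0 \<le> wr \<xi>" by (simp add: wr_def)

lemma hm[measurable]: "i < p \<Longrightarrow> h i \<in> borel_measurable borel"
  using h_cont by (auto intro: borel_measurable_continuous_onI)

lemma h_out: "i < p \<Longrightarrow> \<xi> \<notin> cball 0 R \<Longrightarrow> h i \<xi> = 0"
  using h_supp by auto

lemma h_bound: obtains c where "0 \<le> c" "\<And>i \<xi>. i < p \<Longrightarrow> norm (h i \<xi>) \<le> c"
proof -
  have "bounded (h i ` cball 0 R)" if "i < p" for i
    using h_cont that by (intro compact_imp_bounded compact_continuous_image) (auto intro: continuous_on_subset)
  then have "bounded (\<Union>i<p. h i ` cball 0 R)" by auto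
  then obtain c where c: "\<And>z. z \<in> (\<Union>i<p. h i ` cball 0 R) \<Longrightarrow> norm z \<le> c"
    by (auto simp: bounded_iff)
  have "norm (h i \<xi>) \<le> max c 0" if "i < p" for i \<xi>
    using c[of "h i \<xi>"] h_out[OF that, of \<xi>] that by (cases "\<xi> \<in> cball 0 R") force+
  then show ?thesis using that[of "max c 0"] by auto
qed

lemma M_bound: "norm \<xi> \<le> R \<Longrightarrow> norm \<xi> * wr \<xi> \<le> M"
proof -
  assume n: "norm \<xi> \<le> R"
  have le: "ennreal (norm \<xi>) * w (norm \<xi>) \<le> M_w w R"
    unfolding M_w_def by (rule SUP_upper) (use n in auto)
  then have "enn2real (ennreal (norm \<xi>) * w (norm \<xi>)) \<le> M"
    unfolding M_def using M_fin by (intro enn2real_mono) (auto simp: top.not_eq_extremum)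
  then show ?thesis by (simp add: wr_def enn2real_mult)
qed

lemma M_pos: "M > 0"
proof -
  define \<xi>0 :: "real^3" where "\<xi>0 = R *\<^sub>R axis 1 1"
  have n0: "norm \<xi>0 = R" using R_pos by (simp add: \<xi>0_def norm_axis_1)
  have le: "ennreal (norm \<xi>0) * w (norm \<xi>0) \<le> M_w w R"
    unfolding M_w_def by (rule SUP_upper) (use n0 in auto)
  have "0 < ennreal (norm \<xi>0) * w (norm \<xi>0)"
    using w_pos R_pos n0 by (auto simp: ennreal_zero_less_mult_iff)
  then have "0 < M_w w R" using le by order
  then show ?thesis unfolding M_def using M_fin by (simp add: enn2real_positive_iff)
qed

lemma wr_le: "\<xi> \<noteq> 0 \<Longrightarrow> norm \<xi> \<le> R \<Longrightarrow> wr \<xi> \<le> M / norm \<xi>"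
  using M_bound[of \<xi>] by (simp add: field_simps)

lemma u_int: "k < p \<Longrightarrow> integrable lborel (\<lambda>\<xi>. (norm (h k \<xi>))\<^sup>2 * wr \<xi>)"
  using h_L2 by (simp add: wr_def)

lemma g_int:
  assumes i: "i < p" and j: "j < p"
  shows "integrable lborel (\<lambda>\<xi>. h i \<xi> * cnj (h j \<xi>) * complex_of_real (wr \<xi>))"
proof (rule Bochner_Integration.integrable_bound)
  let ?u = "\<lambda>k \<xi>. (norm (h k \<xi>))\<^sup>2 * wr \<xi>"
  show "integrable lborel (\<lambda>\<xi>. ?u i \<xi> + ?u j \<xi>)"
    using u_int[OF i] u_int[OF j] by (rule Bochner_Integration.integrable_add)
  have um[measurable]: "?u i \<in> borel_measurable borel"
    using borel_measurable_integrable[OF u_int[OF i]] by simp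
  define q where "q \<xi> = (if h i \<xi> = 0 then 0 else ?u i \<xi> / (norm (h i \<xi>))\<^sup>2)" for \<xi>
  have qm[measurable]: "q \<in> borel_measurable borel"
    unfolding q_def using i by measurable
  have eq: "h i \<xi> * cnj (h j \<xi>) * complex_of_real (wr \<xi>) = h i \<xi> * cnj (h j \<xi>) * complex_of_real (q \<xi>)" for \<xi>
    by (simp add: q_def)
  show "(\<lambda>\<xi>. h i \<xi> * cnj (h j \<xi>) * complex_of_real (wr \<xi>)) \<in> borel_measurable lborel"
    unfolding eq using i j by measurable
  show "AE \<xi> in lborel. norm (h i \<xi> * cnj (h j \<xi>) * complex_of_real (wr \<xi>)) \<le> norm (?u i \<xi> + ?u j \<xi>)"
  proof (rule AE_I2)
    fix \<xi>
    have w0: "0 \<le> wr \<xi>" by (rule wr_nonneg)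
    have "norm (h i \<xi>) * norm (h j \<xi>) \<le> (norm (h i \<xi>))\<^sup>2 + (norm (h j \<xi>))\<^sup>2"
    proof -
      have "2 * norm (h i \<xi>) * norm (h j \<xi>) \<le> (norm (h i \<xi>))\<^sup>2 + (norm (h j \<xi>))\<^sup>2"
        using sum_squares_bound[of "norm (h i \<xi>)" "norm (h j \<xi>)"] by (simp add: power2_eq_square)
      moreover have "0 \<le> norm (h i \<xi>) * norm (h j \<xi>)" by simp
      ultimately show ?thesis by linarith
    qed
    then have "norm (h i \<xi>) * norm (h j \<xi>) * wr \<xi> \<le> ((norm (h i \<xi>))\<^sup>2 + (norm (h j \<xi>))\<^sup>2) * wr \<xi>"
      using w0 by (rule mult_right_mono)
    then show "norm (h i \<xi> * cnj (h j \<xi>) * complex_of_real (wr \<xi>)) \<le> norm (?u i \<xi> + ?u j \<xi>)"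
    proof -
      have e1: "norm (h i \<xi> * cnj (h j \<xi>) * complex_of_real (wr \<xi>)) = norm (h i \<xi>) * norm (h j \<xi>) * wr \<xi>"
        using w0 by (simp add: norm_mult)
      have e2: "norm (?u i \<xi> + ?u j \<xi>) = ((norm (h i \<xi>))\<^sup>2 + (norm (h j \<xi>))\<^sup>2) * wr \<xi>"
        using w0 by (simp add: distrib_right)
      show ?thesis unfolding e1 e2 by fact
    qed
  qed
qed

lemma inner_g: "i < p \<Longrightarrow> j < p \<Longrightarrow>
   integral\<^sup>L lborel (\<lambda>\<xi>. h i \<xi> * cnj (h j \<xi>) * complex_of_real (wr \<xi>)) = (if i = j then 1 else 0)"
  using h_orth by (simp add: inner_w_def wr_def)

lemma a_int:
  assumes i: "i < p" and j: "j < p"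
  shows "integrable lborel (\<lambda>\<xi>. h j \<xi> * cnj (h i \<xi>) * complex_of_real (1 / (2 * norm \<xi>)))"
proof (rule integrableI_bounded)
  obtain c where c0: "0 \<le> c" and c: "\<And>i \<xi>. i < p \<Longrightarrow> norm (h i \<xi>) \<le> c" using h_bound by blast
  show "(\<lambda>\<xi>. h j \<xi> * cnj (h i \<xi>) * complex_of_real (1 / (2 * norm \<xi>))) \<in> borel_measurable lborel"
    using i j by measurable
  have cb[measurable]: "cball (0::real^3) R \<in> sets borel" by simp
  have "(\<integral>\<^sup>+\<xi>. ennreal (norm (h j \<xi> * cnj (h i \<xi>) * complex_of_real (1 / (2 * norm \<xi>)))) \<partial>lborel)
      \<le> (\<integral>\<^sup>+\<xi>. ennreal (c * c) * (indicator (cball 0 R) \<xi> * Kinv \<xi>) \<partial>lborel)"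
  proof (rule nn_integral_mono)
    fix \<xi> :: "real^3"
    show "ennreal (norm (h j \<xi> * cnj (h i \<xi>) * complex_of_real (1 / (2 * norm \<xi>))))
          \<le> ennreal (c * c) * (indicator (cball 0 R) \<xi> * Kinv \<xi>)"
    proof (cases "\<xi> \<in> cball 0 R \<and> \<xi> \<noteq> 0")
      case False
      then show ?thesis using h_out[OF j, of \<xi>] by auto
    next
      case True
      have hh: "norm (h j \<xi>) * norm (h i \<xi>) \<le> c * c"
        using c[OF i, of \<xi>] c[OF j, of \<xi>] c0 by (intro mult_mono) auto
      then have "norm (h j \<xi>) * norm (h i \<xi>) * (1 / (2 * norm \<xi>)) \<le> c * c * (1 / norm \<xi>)"
        using True c0 by (intro mult_mono[OF hh]) (auto simp: field_simps)
      then have "ennreal (norm (h j \<xi>) * norm (h i \<xi>) * (1 / (2 * norm \<xi>))) \<le> ennreal (c * c) * ennreal (1 / norm \<xi>)"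
        using c0 by (simp add: ennreal_mult[symmetric] del: ennreal_mult')
      moreover have "norm (h j \<xi> * cnj (h i \<xi>) * complex_of_real (1 / (2 * norm \<xi>))) = norm (h j \<xi>) * norm (h i \<xi>) * (1 / (2 * norm \<xi>))"
        unfolding norm_mult complex_mod_cnj norm_of_real by simp
      ultimately show ?thesis using True by (simp add: Kinv_def)
    qed
  qed
  also have "\<dots> = ennreal (c * c) * (\<integral>\<^sup>+\<xi>. indicator (cball 0 R) \<xi> * Kinv \<xi> \<partial>lborel)"
    by (rule nn_integral_cmult) measurable
  also have "\<dots> < \<infinity>" using Kinv_fin[of R] R_pos by (simp add: ennreal_mult_less_top)
  finally show "(\<integral>\<^sup>+\<xi>. ennreal (norm (h j \<xi> * cnj (h i \<xi>) * complex_of_real (1 / (2 * norm \<xi>)))) \<partial>lborel) < \<infinity>" .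
qed

lemma l_int:
  assumes i1: "i1 < p" and i2: "i2 < p" and j1: "j1 < p" and j2: "j2 < p"
  shows "integrable (lborel \<Otimes>\<^sub>M lborel) (\<lambda>(\<xi>1, \<xi>2). h j1 \<xi>1 * cnj (h j2 \<xi>2) * complex_of_real (kernelK \<xi>1 \<xi>2)
                  * cnj (h i1 \<xi>1) * h i2 \<xi>2)"
proof (rule integrableI_bounded)
  obtain c where c0: "0 \<le> c" and c: "\<And>i \<xi>. i < p \<Longrightarrow> norm (h i \<xi>) \<le> c" using h_bound by blast
  show "(\<lambda>(\<xi>1, \<xi>2). h j1 \<xi>1 * cnj (h j2 \<xi>2) * complex_of_real (kernelK \<xi>1 \<xi>2)
                  * cnj (h i1 \<xi>1) * h i2 \<xi>2) \<in> borel_measurable (lborel \<Otimes>\<^sub>M lborel)"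
    using i1 i2 j1 j2 by measurable
  have cb[measurable]: "cball (0::real^3) R \<in> sets borel" by simp
  have "(\<integral>\<^sup>+q. ennreal (norm ((\<lambda>(\<xi>1, \<xi>2). h j1 \<xi>1 * cnj (h j2 \<xi>2) * complex_of_real (kernelK \<xi>1 \<xi>2)
                  * cnj (h i1 \<xi>1) * h i2 \<xi>2) q)) \<partial>(lborel \<Otimes>\<^sub>M lborel))
      \<le> (\<integral>\<^sup>+q. ennreal (c * c * c * c) * (indicator (cball 0 R) (fst q) * indicator (cball 0 R) (snd q) * Kx (fst q) (snd q)) \<partial>(lborel \<Otimes>\<^sub>M lborel))"
  proof (rule nn_integral_mono)
    fix q :: "(real^3) \<times> (real^3)"
    obtain \<xi>1 \<xi>2 where q: "q = (\<xi>1, \<xi>2)" by (cases q)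
    show "ennreal (norm ((\<lambda>(\<xi>1, \<xi>2). h j1 \<xi>1 * cnj (h j2 \<xi>2) * complex_of_real (kernelK \<xi>1 \<xi>2)
                  * cnj (h i1 \<xi>1) * h i2 \<xi>2) q))
          \<le> ennreal (c * c * c * c) * (indicator (cball 0 R) (fst q) * indicator (cball 0 R) (snd q) * Kx (fst q) (snd q))"
    proof (cases "\<xi>1 \<in> cball 0 R \<and> \<xi>2 \<in> cball 0 R \<and> cross3 \<xi>1 \<xi>2 \<noteq> 0")
      case False
      then show ?thesis using h_out[OF j1, of \<xi>1] h_out[OF j2, of \<xi>2] q by (auto simp: kernelK_def)
    next
      case True
      have k0: "0 \<le> kernelK \<xi>1 \<xi>2" by (simp add: kernelK_def)
      have k1: "kernelK \<xi>1 \<xi>2 \<le> 1 / norm (cross3 \<xi>1 \<xi>2)"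
        using True pi_gt3 by (simp add: kernelK_def field_simps)
      have h4: "norm (h j1 \<xi>1) * norm (h j2 \<xi>2) * norm (h i1 \<xi>1) * norm (h i2 \<xi>2) \<le> c * c * c * c"
        using c[OF i1, of \<xi>1] c[OF j1, of \<xi>1] c[OF i2, of \<xi>2] c[OF j2, of \<xi>2] c0
        by (intro mult_mono) (auto intro: mult_nonneg_nonneg)
      then have "norm (h j1 \<xi>1) * norm (h j2 \<xi>2) * norm (h i1 \<xi>1) * norm (h i2 \<xi>2) * kernelK \<xi>1 \<xi>2
          \<le> c * c * c * c * (1 / norm (cross3 \<xi>1 \<xi>2))"
        using k0 k1 c0 by (intro mult_mono[OF h4]) auto
      then have "ennreal (norm (h j1 \<xi>1) * norm (h j2 \<xi>2) * norm (h i1 \<xi>1) * norm (h i2 \<xi>2) * kernelK \<xi>1 \<xi>2)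
          \<le> ennreal (c * c * c * c) * ennreal (1 / norm (cross3 \<xi>1 \<xi>2))"
        using c0 by (simp add: ennreal_mult[symmetric] del: ennreal_mult')
      then show ?thesis using True q k0 by (simp add: Kx_def norm_mult mult_ac)
    qed
  qed
  also have "\<dots> = ennreal (c * c * c * c) * (\<integral>\<^sup>+q. indicator (cball 0 R) (fst q) * indicator (cball 0 R) (snd q) * Kx (fst q) (snd q) \<partial>(lborel \<Otimes>\<^sub>M lborel))"
    by (rule nn_integral_cmult) measurable
  also have "\<dots> < \<infinity>" using Kx_pair_fin[of R] R_pos by (simp add: ennreal_mult_less_top)
  finally show "(\<integral>\<^sup>+q. ennreal (norm ((\<lambda>(\<xi>1, \<xi>2). h j1 \<xi>1 * cnj (h j2 \<xi>2) * complex_of_real (kernelK \<xi>1 \<xi>2)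
                  * cnj (h i1 \<xi>1) * h i2 \<xi>2) q)) \<partial>(lborel \<Otimes>\<^sub>M lborel)) < \<infinity>" .
qed

lemma A_part:
  assumes eig: "mat_eigenvalue p (hatA h) lam"
  shows "Im lam = 0 \<and> Re lam \<ge> 1 / (2 * M)"
proof -
  obtain v where nz: "\<exists>i<p. v i \<noteq> 0" and ev: "\<forall>i<p. (\<Sum>j<p. hatA h i j * v j) = lam * v i"
    using eig unfolding mat_eigenvalue_def by blast
  define m where "m \<xi> = (\<Sum>j<p. v j * h j \<xi>)" for \<xi>
  define n where "n = (\<Sum>i<p. (cmod (v i))\<^sup>2)"
  define X where "X \<xi> = (cmod (m \<xi>))\<^sup>2 * (1 / (2 * norm \<xi>))" for \<xi> :: "real^3"
  define Y where "Y \<xi> = (cmod (m \<xi>))\<^sup>2 * wr \<xi>" for \<xi> :: "real^3"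
  define a' where "a' i j \<xi> = h j \<xi> * cnj (h i \<xi>) * complex_of_real (1 / (2 * norm \<xi>))" for i j and \<xi> :: "real^3"
  define g where "g i j \<xi> = h i \<xi> * cnj (h j \<xi>) * complex_of_real (wr \<xi>)" for i j and \<xi> :: "real^3"
  have npos: "n > 0"
  proof -
    obtain i where "i < p" "v i \<noteq> 0" using nz by blast
    then show ?thesis unfolding n_def by (intro sum_pos2[of _ i]) auto
  qed
  have sq: "complex_of_real ((cmod z)\<^sup>2) = cnj z * z" for z
    by (metis complex_norm_square mult.commute)
  have L1: "(\<Sum>i<p. cnj (v i) * (\<Sum>j<p. hatA h i j * v j)) = lam * complex_of_real n"
  proof -
    have "(\<Sum>i<p. cnj (v i) * (\<Sum>j<p. hatA h i j * v j)) = (\<Sum>i<p. lam * (cnj (v i) * v i))"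
      using ev by (intro sum.cong) (auto simp: mult_ac)
    also have "\<dots> = lam * complex_of_real n"
      unfolding n_def of_real_sum sum_distrib_left sq by (rule refl)
    finally show ?thesis .
  qed
  have ai: "i < p \<Longrightarrow> j < p \<Longrightarrow> integrable lborel (a' i j)" for i j
    unfolding a'_def by (rule a_int)
  have gi: "i < p \<Longrightarrow> j < p \<Longrightarrow> integrable lborel (g i j)" for i j
    unfolding g_def by (rule g_int)
  have hA: "hatA h i j = integral\<^sup>L lborel (a' i j)" for i j
    unfolding hatA_def a'_def by (rule refl)
  have L2: "(\<Sum>i<p. cnj (v i) * (\<Sum>j<p. hatA h i j * v j))
      = integral\<^sup>L lborel (\<lambda>\<xi>. \<Sum>i<p. \<Sum>j<p. cnj (v i) * v j * a' i j \<xi>)"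
  proof -
    have "(\<Sum>i<p. cnj (v i) * (\<Sum>j<p. hatA h i j * v j)) = (\<Sum>i<p. \<Sum>j<p. integral\<^sup>L lborel (\<lambda>\<xi>. cnj (v i) * v j * a' i j \<xi>))"
      by (simp only: integral_mult_right_zero hA) (simp add: sum_distrib_left mult_ac)
    also have "\<dots> = (\<Sum>i<p. integral\<^sup>L lborel (\<lambda>\<xi>. \<Sum>j<p. cnj (v i) * v j * a' i j \<xi>))"
      by (intro sum.cong refl Bochner_Integration.integral_sum[symmetric] integrable_mult_right ai) auto
    also have "\<dots> = integral\<^sup>L lborel (\<lambda>\<xi>. \<Sum>i<p. \<Sum>j<p. cnj (v i) * v j * a' i j \<xi>)"
      by (intro Bochner_Integration.integral_sum[symmetric] Bochner_Integration.integrable_sum integrable_mult_right ai) auto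
    finally show ?thesis .
  qed
  have P1: "(\<Sum>i<p. \<Sum>j<p. cnj (v i) * v j * a' i j \<xi>) = complex_of_real (X \<xi>)" for \<xi>
  proof -
    have "(\<Sum>i<p. \<Sum>j<p. cnj (v i) * v j * a' i j \<xi>)
        = (\<Sum>i<p. \<Sum>j<p. cnj (v i * h i \<xi>) * (v j * h j \<xi>)) * complex_of_real (1 / (2 * norm \<xi>))"
      unfolding sum_distrib_right by (intro sum.cong refl) (simp add: a'_def mult_ac)
    also have "\<dots> = (\<Sum>i<p. cnj (v i * h i \<xi>)) * (\<Sum>j<p. v j * h j \<xi>) * complex_of_real (1 / (2 * norm \<xi>))"
      by (simp only: sum_product)
    also have "\<dots> = complex_of_real (X \<xi>)"
      unfolding X_def m_def of_real_mult sq cnj_sum by (simp add: mult_ac)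
    finally show ?thesis .
  qed
  have Xc_int: "integrable lborel (\<lambda>\<xi>. complex_of_real (X \<xi>))"
    unfolding P1[symmetric]
    by (intro Bochner_Integration.integrable_sum integrable_mult_right ai) auto
  have X_int: "integrable lborel X"
    using integrable_Re[OF Xc_int] by simp
  have EQ1: "lam * complex_of_real n = complex_of_real (integral\<^sup>L lborel X)"
    using L1 L2 by (simp add: P1)
  have ig: "i < p \<Longrightarrow> j < p \<Longrightarrow> integral\<^sup>L lborel (g i j) = (if i = j then 1 else 0)" for i j
    unfolding g_def by (rule inner_g)
  have O1: "(\<Sum>i<p. \<Sum>j<p. v i * cnj (v j) * integral\<^sup>L lborel (g i j)) = complex_of_real n"
  proof -
    have "(\<Sum>i<p. \<Sum>j<p. v i * cnj (v j) * integral\<^sup>L lborel (g i j)) = (\<Sum>i<p. \<Sum>j<p. if i = j then v i * cnj (v j) else 0)"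
      by (intro sum.cong refl) (simp add: ig)
    also have "\<dots> = (\<Sum>i<p. v i * cnj (v i))" by simp
    also have "\<dots> = complex_of_real n" unfolding n_def of_real_sum sq by (simp add: mult.commute)
    finally show ?thesis .
  qed
  have O2: "(\<Sum>i<p. \<Sum>j<p. v i * cnj (v j) * integral\<^sup>L lborel (g i j))
      = integral\<^sup>L lborel (\<lambda>\<xi>. \<Sum>i<p. \<Sum>j<p. v i * cnj (v j) * g i j \<xi>)"
  proof -
    have "(\<Sum>i<p. \<Sum>j<p. v i * cnj (v j) * integral\<^sup>L lborel (g i j)) = (\<Sum>i<p. \<Sum>j<p. integral\<^sup>L lborel (\<lambda>\<xi>. v i * cnj (v j) * g i j \<xi>))"
      by (simp only: integral_mult_right_zero)
    also have "\<dots> = (\<Sum>i<p. integral\<^sup>L lborel (\<lambda>\<xi>. \<Sum>j<p. v i * cnj (v j) * g i j \<xi>))"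
      by (intro sum.cong refl Bochner_Integration.integral_sum[symmetric] integrable_mult_right gi) auto
    also have "\<dots> = integral\<^sup>L lborel (\<lambda>\<xi>. \<Sum>i<p. \<Sum>j<p. v i * cnj (v j) * g i j \<xi>)"
      by (intro Bochner_Integration.integral_sum[symmetric] Bochner_Integration.integrable_sum integrable_mult_right gi) auto
    finally show ?thesis .
  qed
  have P2: "(\<Sum>i<p. \<Sum>j<p. v i * cnj (v j) * g i j \<xi>) = complex_of_real (Y \<xi>)" for \<xi>
  proof -
    have "(\<Sum>i<p. \<Sum>j<p. v i * cnj (v j) * g i j \<xi>)
        = (\<Sum>i<p. \<Sum>j<p. (v i * h i \<xi>) * cnj (v j * h j \<xi>)) * complex_of_real (wr \<xi>)"
      unfolding sum_distrib_right by (intro sum.cong refl) (simp add: g_def mult_ac)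
    also have "\<dots> = (\<Sum>i<p. v i * h i \<xi>) * (\<Sum>j<p. cnj (v j * h j \<xi>)) * complex_of_real (wr \<xi>)"
      by (simp only: sum_product)
    also have "\<dots> = complex_of_real (Y \<xi>)"
      unfolding Y_def m_def of_real_mult sq cnj_sum by (simp add: mult_ac)
    finally show ?thesis .
  qed
  have Yc_int: "integrable lborel (\<lambda>\<xi>. complex_of_real (Y \<xi>))"
    unfolding P2[symmetric]
    by (intro Bochner_Integration.integrable_sum integrable_mult_right gi) auto
  have Y_int: "integrable lborel Y"
    using integrable_Re[OF Yc_int] by simp
  have EQ2: "integral\<^sup>L lborel Y = n"
    using O1 O2 by (simp add: P2)
  have Mp: "M > 0" by (rule M_pos)
  have cmp: "integral\<^sup>L lborel (\<lambda>\<xi>. Y \<xi> / (2 * M)) \<le> integral\<^sup>L lborel X"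
  proof (rule integral_mono_AE)
    show "integrable lborel (\<lambda>\<xi>. Y \<xi> / (2 * M))" using Y_int by (rule integrable_divide)
    show "integrable lborel X" by (rule X_int)
    show "AE \<xi> in lborel. Y \<xi> / (2 * M) \<le> X \<xi>"
      using AE_lborel_singleton[of 0]
    proof eventually_elim
      fix \<xi> :: "real^3" assume x0: "\<xi> \<noteq> 0"
      show "Y \<xi> / (2 * M) \<le> X \<xi>"
      proof (cases "norm \<xi> \<le> R")
        case True
        have "wr \<xi> \<le> M / norm \<xi>" by (rule wr_le[OF x0 True])
        then have "wr \<xi> / (2 * M) \<le> 1 / (2 * norm \<xi>)"
          using Mp x0 by (simp add: field_simps)
        then have "(cmod (m \<xi>))\<^sup>2 * (wr \<xi> / (2 * M)) \<le> (cmod (m \<xi>))\<^sup>2 * (1 / (2 * norm \<xi>))"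
          by (rule mult_left_mono) simp
        then show ?thesis by (simp add: X_def Y_def)
      next
        case False
        then have "m \<xi> = 0" unfolding m_def using h_out by (auto intro!: sum.neutral)
        then show ?thesis by (simp add: X_def Y_def)
      qed
    qed
  qed
  then have cmp2: "n / (2 * M) \<le> integral\<^sup>L lborel X" using EQ2 by simp
  have lam_eq: "lam = complex_of_real (integral\<^sup>L lborel X / n)"
    using EQ1 npos by (simp add: field_simps)
  have "1 / (2 * M) \<le> integral\<^sup>L lborel X / n"
    using cmp2 npos Mp by (simp add: field_simps)
  then show ?thesis using lam_eq by simp
qed

lemma sum4_product:
  fixes A B :: "nat \<Rightarrow> nat \<Rightarrow> complex"
  shows "(\<Sum>i1<p. \<Sum>i2<p. A i1 i2) * (\<Sum>j1<p. \<Sum>j2<p. B j1 j2) = (\<Sum>i1<p. \<Sum>i2<p. \<Sum>j1<p. \<Sum>j2<p. A i1 i2 * B j1 j2)"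
  by (simp only: sum_product) (rule sum.cong[OF refl], rule sum.swap)

lemma delta2:
  assumes "j1 < p" "j2 < p"
  shows "(\<Sum>i1<p. \<Sum>i2<p. if i1 = j1 then (if i2 = j2 then f i1 i2 else 0) else (0::complex)) = f j1 j2"
proof -
  have "(\<Sum>i1<p. \<Sum>i2<p. if i1 = j1 then (if i2 = j2 then f i1 i2 else 0) else (0::complex))
      = (\<Sum>i1<p. if i1 = j1 then (\<Sum>i2<p. if i2 = j2 then f i1 i2 else 0) else 0)"
    by (intro sum.cong) auto
  also have "\<dots> = f j1 j2" using assms by (simp add: sum.delta)
  finally show ?thesis .
qed

lemma norm_cross_le: "norm (cross3 x y) \<le> norm x * norm y"
proof -
  have "(norm (cross3 x y))\<^sup>2 \<le> (norm x * norm y)\<^sup>2"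
    using norm_cross_dot[of x y] by (metis le_add_same_cancel1 zero_le_power2)
  then show ?thesis by (rule power2_le_imp_le) simp
qed

lemma L_part:
  assumes eig: "op_eigenvalue p (hatL h) lam"
  shows "Im lam = 0 \<and> Re lam \<ge> 1 / (2 * pi * M\<^sup>2)"
proof -
  obtain S where nz: "\<exists>i1<p. \<exists>i2<p. S i1 i2 \<noteq> 0"
    and ev: "\<forall>i1<p. \<forall>i2<p. (\<Sum>j1<p. \<Sum>j2<p. hatL h i1 i2 j1 j2 * S j1 j2) = lam * S i1 i2"
    using eig unfolding op_eigenvalue_def by blast
  define Bf where "Bf q j1 j2 = S j1 j2 * h j1 (fst q) * cnj (h j2 (snd q))" for q :: "(real^3) \<times> (real^3)" and j1 j2
  define C where "C q = (\<Sum>j1<p. \<Sum>j2<p. Bf q j1 j2)" for q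
  define n where "n = (\<Sum>i1<p. \<Sum>i2<p. (cmod (S i1 i2))\<^sup>2)"
  define X where "X q = (cmod (C q))\<^sup>2 * kernelK (fst q) (snd q)" for q
  define Y where "Y q = (cmod (C q))\<^sup>2 * (wr (fst q) * wr (snd q))" for q
  define l where "l i1 i2 j1 j2 q = h j1 (fst q) * cnj (h j2 (snd q)) * complex_of_real (kernelK (fst q) (snd q))
                  * cnj (h i1 (fst q)) * h i2 (snd q)" for i1 i2 j1 j2 and q :: "(real^3) \<times> (real^3)"
  define g where "g i j \<xi> = h i \<xi> * cnj (h j \<xi>) * complex_of_real (wr \<xi>)" for i j and \<xi> :: "real^3"
  have npos: "n > 0"
  proof -
    obtain i1 i2 where i: "i1 < p" "i2 < p" "S i1 i2 \<noteq> 0" using nz by blast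
    have pos: "0 < (\<Sum>i2<p. (cmod (S i1 i2))\<^sup>2)" using i by (intro sum_pos2[of _ i2]) auto
    show ?thesis unfolding n_def
      by (rule sum_pos2[where i=i1]) (use pos i in \<open>auto intro: sum_nonneg\<close>)
  qed
  have sq: "complex_of_real ((cmod z)\<^sup>2) = cnj z * z" for z
    by (metis complex_norm_square mult.commute)
  have hL: "hatL h i1 i2 j1 j2 = integral\<^sup>L (lborel \<Otimes>\<^sub>M lborel) (l i1 i2 j1 j2)" for i1 i2 j1 j2
    unfolding hatL_def l_def split_beta' by (rule refl)
  have li: "i1 < p \<Longrightarrow> i2 < p \<Longrightarrow> j1 < p \<Longrightarrow> j2 < p \<Longrightarrow> integrable (lborel \<Otimes>\<^sub>M lborel) (l i1 i2 j1 j2)" for i1 i2 j1 j2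
    using l_int[of i1 i2 j1 j2] unfolding l_def split_beta' by simp
  have L1: "(\<Sum>i1<p. \<Sum>i2<p. cnj (S i1 i2) * (\<Sum>j1<p. \<Sum>j2<p. hatL h i1 i2 j1 j2 * S j1 j2)) = lam * complex_of_real n"
  proof -
    have "(\<Sum>i1<p. \<Sum>i2<p. cnj (S i1 i2) * (\<Sum>j1<p. \<Sum>j2<p. hatL h i1 i2 j1 j2 * S j1 j2))
        = (\<Sum>i1<p. \<Sum>i2<p. lam * (cnj (S i1 i2) * S i1 i2))"
      using ev by (intro sum.cong refl) (auto simp: mult_ac)
    also have "\<dots> = lam * complex_of_real n"
      unfolding n_def of_real_sum sum_distrib_left sq by (rule refl)
    finally show ?thesis .
  qed
  have L2: "(\<Sum>i1<p. \<Sum>i2<p. cnj (S i1 i2) * (\<Sum>j1<p. \<Sum>j2<p. hatL h i1 i2 j1 j2 * S j1 j2))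
      = integral\<^sup>L (lborel \<Otimes>\<^sub>M lborel) (\<lambda>q. \<Sum>i1<p. \<Sum>i2<p. \<Sum>j1<p. \<Sum>j2<p. cnj (S i1 i2) * S j1 j2 * l i1 i2 j1 j2 q)"
  proof -
    have "(\<Sum>i1<p. \<Sum>i2<p. cnj (S i1 i2) * (\<Sum>j1<p. \<Sum>j2<p. hatL h i1 i2 j1 j2 * S j1 j2))
        = (\<Sum>i1<p. \<Sum>i2<p. \<Sum>j1<p. \<Sum>j2<p. integral\<^sup>L (lborel \<Otimes>\<^sub>M lborel) (\<lambda>q. cnj (S i1 i2) * S j1 j2 * l i1 i2 j1 j2 q))"
      by (simp only: integral_mult_right_zero hL) (simp add: sum_distrib_left mult_ac)
    also have "\<dots> = integral\<^sup>L (lborel \<Otimes>\<^sub>M lborel) (\<lambda>q. \<Sum>i1<p. \<Sum>i2<p. \<Sum>j1<p. \<Sum>j2<p. cnj (S i1 i2) * S j1 j2 * l i1 i2 j1 j2 q)"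
      by (subst Bochner_Integration.integral_sum, 
          auto intro!: Bochner_Integration.integrable_sum integrable_mult_right li sum.cong
               simp: Bochner_Integration.integral_sum)+
    finally show ?thesis .
  qed
  have P1: "(\<Sum>i1<p. \<Sum>i2<p. \<Sum>j1<p. \<Sum>j2<p. cnj (S i1 i2) * S j1 j2 * l i1 i2 j1 j2 q) = complex_of_real (X q)" for q
  proof -
    have "(\<Sum>i1<p. \<Sum>i2<p. \<Sum>j1<p. \<Sum>j2<p. cnj (S i1 i2) * S j1 j2 * l i1 i2 j1 j2 q)
        = (\<Sum>i1<p. \<Sum>i2<p. \<Sum>j1<p. \<Sum>j2<p. cnj (Bf q i1 i2) * Bf q j1 j2) * complex_of_real (kernelK (fst q) (snd q))"
      unfolding sum_distrib_right by (intro sum.cong refl) (simp add: l_def Bf_def mult_ac)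
    also have "\<dots> = (\<Sum>i1<p. \<Sum>i2<p. cnj (Bf q i1 i2)) * (\<Sum>j1<p. \<Sum>j2<p. Bf q j1 j2) * complex_of_real (kernelK (fst q) (snd q))"
      by (simp only: sum4_product)
    also have "\<dots> = complex_of_real (X q)"
      unfolding X_def C_def of_real_mult sq cnj_sum by (rule refl)
    finally show ?thesis .
  qed
  have Xc_int: "integrable (lborel \<Otimes>\<^sub>M lborel) (\<lambda>q. complex_of_real (X q))"
    unfolding P1[symmetric]
    by (intro Bochner_Integration.integrable_sum integrable_mult_right li) auto
  have X_int: "integrable (lborel \<Otimes>\<^sub>M lborel) X"
    using integrable_Re[OF Xc_int] by simp
  have EQ1: "lam * complex_of_real n = complex_of_real (integral\<^sup>L (lborel \<Otimes>\<^sub>M lborel) X)"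
    using L1 L2 by (simp add: P1)
  have gi: "i < p \<Longrightarrow> j < p \<Longrightarrow> integrable lborel (g i j)" for i j
    unfolding g_def by (rule g_int)
  have ig: "i < p \<Longrightarrow> j < p \<Longrightarrow> integral\<^sup>L lborel (g i j) = (if i = j then 1 else 0)" for i j
    unfolding g_def by (rule inner_g)
  define G where "G j1 j2 i1 i2 q = g j1 i1 (fst q) * g i2 j2 (snd q)" for j1 j2 i1 i2 and q :: "(real^3) \<times> (real^3)"
  have Gi: "j1 < p \<Longrightarrow> j2 < p \<Longrightarrow> i1 < p \<Longrightarrow> i2 < p \<Longrightarrow> integrable (lborel \<Otimes>\<^sub>M lborel) (G j1 j2 i1 i2)" for j1 j2 i1 i2
    unfolding G_def by (intro prod_integrable gi)
  have iG: "j1 < p \<Longrightarrow> j2 < p \<Longrightarrow> i1 < p \<Longrightarrow> i2 < p \<Longrightarrow>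
      integral\<^sup>L (lborel \<Otimes>\<^sub>M lborel) (G j1 j2 i1 i2) = (if j1 = i1 \<and> i2 = j2 then 1 else 0)" for j1 j2 i1 i2
    unfolding G_def by (simp add: prod_integral gi ig)
  have O1: "(\<Sum>j1<p. \<Sum>j2<p. \<Sum>i1<p. \<Sum>i2<p. S j1 j2 * cnj (S i1 i2) * integral\<^sup>L (lborel \<Otimes>\<^sub>M lborel) (G j1 j2 i1 i2)) = complex_of_real n"
  proof -
    have "(\<Sum>j1<p. \<Sum>j2<p. \<Sum>i1<p. \<Sum>i2<p. S j1 j2 * cnj (S i1 i2) * integral\<^sup>L (lborel \<Otimes>\<^sub>M lborel) (G j1 j2 i1 i2))
        = (\<Sum>j1<p. \<Sum>j2<p. \<Sum>i1<p. \<Sum>i2<p. if i1 = j1 then (if i2 = j2 then S j1 j2 * cnj (S i1 i2) else 0) else 0)"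
      by (intro sum.cong refl) (auto simp: iG)
    also have "\<dots> = (\<Sum>j1<p. \<Sum>j2<p. S j1 j2 * cnj (S j1 j2))"
      by (intro sum.cong refl) (rule delta2[where f="\<lambda>i1 i2. S _ _ * cnj (S i1 i2)"], auto)
    also have "\<dots> = complex_of_real n" unfolding n_def of_real_sum sq by (simp add: mult.commute)
    finally show ?thesis .
  qed
  have O2: "(\<Sum>j1<p. \<Sum>j2<p. \<Sum>i1<p. \<Sum>i2<p. S j1 j2 * cnj (S i1 i2) * integral\<^sup>L (lborel \<Otimes>\<^sub>M lborel) (G j1 j2 i1 i2))
      = integral\<^sup>L (lborel \<Otimes>\<^sub>M lborel) (\<lambda>q. \<Sum>j1<p. \<Sum>j2<p. \<Sum>i1<p. \<Sum>i2<p. S j1 j2 * cnj (S i1 i2) * G j1 j2 i1 i2 q)"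
  proof -
    have "(\<Sum>j1<p. \<Sum>j2<p. \<Sum>i1<p. \<Sum>i2<p. S j1 j2 * cnj (S i1 i2) * integral\<^sup>L (lborel \<Otimes>\<^sub>M lborel) (G j1 j2 i1 i2))
        = (\<Sum>j1<p. \<Sum>j2<p. \<Sum>i1<p. \<Sum>i2<p. integral\<^sup>L (lborel \<Otimes>\<^sub>M lborel) (\<lambda>q. S j1 j2 * cnj (S i1 i2) * G j1 j2 i1 i2 q))"
      by (simp only: integral_mult_right_zero)
    also have "\<dots> = integral\<^sup>L (lborel \<Otimes>\<^sub>M lborel) (\<lambda>q. \<Sum>j1<p. \<Sum>j2<p. \<Sum>i1<p. \<Sum>i2<p. S j1 j2 * cnj (S i1 i2) * G j1 j2 i1 i2 q)"
      by (subst Bochner_Integration.integral_sum, 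
          auto intro!: Bochner_Integration.integrable_sum integrable_mult_right Gi sum.cong
               simp: Bochner_Integration.integral_sum)+
    finally show ?thesis .
  qed
  have P2: "(\<Sum>j1<p. \<Sum>j2<p. \<Sum>i1<p. \<Sum>i2<p. S j1 j2 * cnj (S i1 i2) * G j1 j2 i1 i2 q) = complex_of_real (Y q)" for q
  proof -
    have "(\<Sum>j1<p. \<Sum>j2<p. \<Sum>i1<p. \<Sum>i2<p. S j1 j2 * cnj (S i1 i2) * G j1 j2 i1 i2 q)
        = (\<Sum>j1<p. \<Sum>j2<p. \<Sum>i1<p. \<Sum>i2<p. Bf q j1 j2 * cnj (Bf q i1 i2)) * complex_of_real (wr (fst q) * wr (snd q))"
      unfolding sum_distrib_right by (intro sum.cong refl) (simp add: G_def g_def Bf_def mult_ac)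
    also have "\<dots> = (\<Sum>j1<p. \<Sum>j2<p. Bf q j1 j2) * (\<Sum>i1<p. \<Sum>i2<p. cnj (Bf q i1 i2)) * complex_of_real (wr (fst q) * wr (snd q))"
      by (simp only: sum4_product)
    also have "\<dots> = complex_of_real (Y q)"
      unfolding Y_def C_def of_real_mult sq cnj_sum by (simp add: mult_ac)
    finally show ?thesis .
  qed
  have Yc_int: "integrable (lborel \<Otimes>\<^sub>M lborel) (\<lambda>q. complex_of_real (Y q))"
    unfolding P2[symmetric]
    by (intro Bochner_Integration.integrable_sum integrable_mult_right Gi) auto
  have Y_int: "integrable (lborel \<Otimes>\<^sub>M lborel) Y"
    using integrable_Re[OF Yc_int] by simp
  have EQ2: "integral\<^sup>L (lborel \<Otimes>\<^sub>M lborel) Y = n"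
    using O1 O2 by (simp add: P2)
  have Mp: "M > 0" by (rule M_pos)
  have cmp: "integral\<^sup>L (lborel \<Otimes>\<^sub>M lborel) (\<lambda>q. Y q / (2 * pi * M\<^sup>2)) \<le> integral\<^sup>L (lborel \<Otimes>\<^sub>M lborel) X"
  proof (rule integral_mono_AE)
    show "integrable (lborel \<Otimes>\<^sub>M lborel) (\<lambda>q. Y q / (2 * pi * M\<^sup>2))" using Y_int by (rule integrable_divide)
    show "integrable (lborel \<Otimes>\<^sub>M lborel) X" by (rule X_int)
    show "AE q in lborel \<Otimes>\<^sub>M lborel. Y q / (2 * pi * M\<^sup>2) \<le> X q"
      using AE_cross_nz[OF less_imp_le[OF R_pos]]
    proof eventually_elim
      fix q :: "(real^3) \<times> (real^3)"
      assume a: "fst q \<in> cball 0 R \<longrightarrow> snd q \<in> cball 0 R \<longrightarrow> cross3 (fst q) (snd q) \<noteq> 0"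
      show "Y q / (2 * pi * M\<^sup>2) \<le> X q"
      proof (cases "fst q \<in> cball 0 R \<and> snd q \<in> cball 0 R")
        case True
        with a have cz: "cross3 (fst q) (snd q) \<noteq> 0" by blast
        then have x0: "fst q \<noteq> 0" and y0: "snd q \<noteq> 0" by auto
        have nx: "norm (fst q) > 0" and ny: "norm (snd q) > 0" using x0 y0 by auto
        have nc: "norm (cross3 (fst q) (snd q)) > 0" using cz by simp
        have w1: "wr (fst q) \<le> M / norm (fst q)" using wr_le[OF x0] True by simp
        have w2: "wr (snd q) \<le> M / norm (snd q)" using wr_le[OF y0] True by simp
        have "wr (fst q) * wr (snd q) \<le> (M / norm (fst q)) * (M / norm (snd q))"
          using w1 w2 wr_nonneg Mp nx by (intro mult_mono) auto
        then have "wr (fst q) * wr (snd q) / (2 * pi * M\<^sup>2) \<le> (M / norm (fst q)) * (M / norm (snd q)) / (2 * pi * M\<^sup>2)"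
          using Mp by (intro divide_right_mono) auto
        also have "\<dots> = 1 / (2 * pi * (norm (fst q) * norm (snd q)))"
          using Mp nx ny by (simp add: field_simps power2_eq_square)
        also have "\<dots> \<le> 1 / (2 * pi * norm (cross3 (fst q) (snd q)))"
          using nc nx ny norm_cross_le[of "fst q" "snd q"] by (intro divide_left_mono mult_left_mono) (auto simp: zero_less_mult_iff)
        also have "\<dots> = kernelK (fst q) (snd q)" by (simp add: kernelK_def)
        finally have "wr (fst q) * wr (snd q) / (2 * pi * M\<^sup>2) \<le> kernelK (fst q) (snd q)" .
        then have "(cmod (C q))\<^sup>2 * (wr (fst q) * wr (snd q) / (2 * pi * M\<^sup>2)) \<le> (cmod (C q))\<^sup>2 * kernelK (fst q) (snd q)"
          by (rule mult_left_mono) simp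
        then show ?thesis by (simp add: X_def Y_def)
      next
        case False
        then have "C q = 0" unfolding C_def Bf_def using h_out by (auto intro!: sum.neutral)
        then show ?thesis by (simp add: X_def Y_def)
      qed
    qed
  qed
  then have cmp2: "n / (2 * pi * M\<^sup>2) \<le> integral\<^sup>L (lborel \<Otimes>\<^sub>M lborel) X" using EQ2 by simp
  have lam_eq: "lam = complex_of_real (integral\<^sup>L (lborel \<Otimes>\<^sub>M lborel) X / n)"
    using EQ1 npos by (simp add: field_simps)
  have "1 / (2 * pi * M\<^sup>2) \<le> integral\<^sup>L (lborel \<Otimes>\<^sub>M lborel) X / n"
    using cmp2 npos Mp by (simp add: field_simps)
  then show ?thesis using lam_eq by simp
qed

end

theorem proposition3p3:
  fixes w :: "real \<Rightarrow> ennreal" and \<omega>max :: real and p :: nat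
    and h :: "nat \<Rightarrow> real^3 \<Rightarrow> complex"
  assumes w_pos: "\<forall>r\<ge>0. w r > 0"
    and \<omega>_pos: "\<omega>max > 0"
    and h_cont: "\<forall>i<p. continuous_on UNIV (h i)"
    and h_supp: "\<forall>i<p. \<forall>\<xi>. norm \<xi> > \<omega>max \<longrightarrow> h i \<xi> = 0"
    and h_L2: "\<forall>i<p. integrable lborel (\<lambda>\<xi>. (norm (h i \<xi>))\<^sup>2 * enn2real (w (norm \<xi>)))"
    and h_orth: "\<forall>i<p. \<forall>j<p. inner_w w (h i) (h j) = (if i = j then 1 else 0)"
    and M_fin: "M_w w \<omega>max < \<infinity>"
  shows "(\<forall>lam. mat_eigenvalue p (hatA h) lam \<longrightarrow>
            Im lam = 0 \<and> Re lam \<ge> 1 / (2 * enn2real (M_w w \<omega>max)))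
       \<and> (\<forall>lam. op_eigenvalue p (hatL h) lam \<longrightarrow>
            Im lam = 0 \<and> Re lam \<ge> 1 / (2 * pi * (enn2real (M_w w \<omega>max))\<^sup>2))"
  proof -
  interpret P33 w \<omega>max p h
    using w_pos \<omega>_pos h_cont h_supp h_L2 h_orth M_fin by unfold_locales
  show ?thesis using A_part L_part unfolding M_def by blast
qed

end
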